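(* Let $G$ be a BDH graph with color classes $X$ and $Y$, and let $v,v'\in V(G)$. Define $G\star\{v,v'\}$ as follows: if $v$ and $v'$ lie in different color classes, $G\star\{v,v'\}=G$; if they lie in the same color class, $G\star\{v,v'\}$ is obtained from $G$ by adding a new vertex $\widehat{vv'}$ to that color class, adjacent exactly to the vertices of $N(v)\cap N(v')$. Then $G\star\{v,v'\}$ is a BDH graph.
   Context: A graph $G$ is distance hereditary if for every connected induced subgraph $H$ of $G$ and all $u,v\in V(H)$, $d_H(u,v)=d_G(u,v)$; a BDH graph is a bipartite distance hereditary graph. (Equivalently, a bipartite graph is BDH iff it has no induced chordless cycle of length $\ge 6$ and no induced domino, where a domino is $C_6$ plus a chord joining two antipodal vertices.) $N(v)$ denotes the neighborhood of $v$. *)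

theory Defs
  imports Main
begin

definition simple_graph :: "'a set \<Rightarrow> ('a \<Rightarrow> 'a \<Rightarrow> bool) \<Rightarrow> bool" where
  "simple_graph V E \<longleftrightarrow> finite V \<and> (\<forall>x y. E x y \<longrightarrow> E y x) \<and> (\<forall>x. \<not> E x x)
     \<and> (\<forall>x y. E x y \<longrightarrow> x \<in> V \<and> y \<in> V)"

definition nbhd :: "('a \<Rightarrow> 'a \<Rightarrow> bool) \<Rightarrow> 'a \<Rightarrow> 'a set" where
  "nbhd E v = {u. E v u}"

fun walk_in :: "('a \<Rightarrow> 'a \<Rightarrow> bool) \<Rightarrow> 'a set \<Rightarrow> 'a list \<Rightarrow> bool" where
  "walk_in E S [] = False"
| "walk_in E S [x] = (x \<in> S)"
| "walk_in E S (x # y # xs) = (x \<in> S \<and> E x y \<and> walk_in E S (y # xs))"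

text \<open>Distance between u and v in the subgraph induced by S (number of edges of a
shortest walk); only meaningful when a walk exists.\<close>

definition dist_in :: "('a \<Rightarrow> 'a \<Rightarrow> bool) \<Rightarrow> 'a set \<Rightarrow> 'a \<Rightarrow> 'a \<Rightarrow> nat" where
  "dist_in E S u v = (LEAST n. \<exists>p. walk_in E S p \<and> hd p = u \<and> last p = v \<and> length p = Suc n)"

definition connected_in :: "('a \<Rightarrow> 'a \<Rightarrow> bool) \<Rightarrow> 'a set \<Rightarrow> bool" where
  "connected_in E S \<longleftrightarrow> S \<noteq> {} \<and>
     (\<forall>u\<in>S. \<forall>v\<in>S. \<exists>p. walk_in E S p \<and> hd p = u \<and> last p = v)"

definition distance_hereditary :: "'a set \<Rightarrow> ('a \<Rightarrow> 'a \<Rightarrow> bool) \<Rightarrow> bool" where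
  "distance_hereditary V E \<longleftrightarrow>
     (\<forall>S \<subseteq> V. connected_in E S \<longrightarrow> (\<forall>u\<in>S. \<forall>v\<in>S. dist_in E S u v = dist_in E V u v))"

definition bipartition :: "'a set \<Rightarrow> ('a \<Rightarrow> 'a \<Rightarrow> bool) \<Rightarrow> 'a set \<Rightarrow> 'a set \<Rightarrow> bool" where
  "bipartition V E X Y \<longleftrightarrow> X \<inter> Y = {} \<and> X \<union> Y = V \<and>
     (\<forall>x\<in>X. \<forall>x'\<in>X. \<not> E x x') \<and> (\<forall>y\<in>Y. \<forall>y'\<in>Y. \<not> E y y')"

definition BDH :: "'a set \<Rightarrow> ('a \<Rightarrow> 'a \<Rightarrow> bool) \<Rightarrow> 'a set \<Rightarrow> 'a set \<Rightarrow> bool" where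
  "BDH V E X Y \<longleftrightarrow> simple_graph V E \<and> bipartition V E X Y \<and> distance_hereditary V E"

text \<open>The operation G \<star> {v,v'}; w is the new vertex (assumed fresh).\<close>

definition same_class :: "'a set \<Rightarrow> 'a set \<Rightarrow> 'a \<Rightarrow> 'a \<Rightarrow> bool" where
  "same_class X Y v v' \<longleftrightarrow> (v \<in> X \<and> v' \<in> X) \<or> (v \<in> Y \<and> v' \<in> Y)"

definition star_V :: "'a set \<Rightarrow> 'a set \<Rightarrow> 'a set \<Rightarrow> 'a \<Rightarrow> 'a \<Rightarrow> 'a \<Rightarrow> 'a set" where
  "star_V V X Y v v' w = (if same_class X Y v v' then insert w V else V)"

definition star_E :: "('a \<Rightarrow> 'a \<Rightarrow> bool) \<Rightarrow> 'a set \<Rightarrow> 'a set \<Rightarrow> 'a \<Rightarrow> 'a \<Rightarrow> 'a \<Rightarrow> 'a \<Rightarrow> 'a \<Rightarrow> bool" where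
  "star_E E X Y v v' w = (if same_class X Y v v' then
     (\<lambda>x y. E x y \<or> (x = w \<and> y \<in> nbhd E v \<inter> nbhd E v') \<or> (y = w \<and> x \<in> nbhd E v \<inter> nbhd E v'))
     else E)"

definition star_X :: "'a set \<Rightarrow> 'a set \<Rightarrow> 'a \<Rightarrow> 'a \<Rightarrow> 'a \<Rightarrow> 'a set" where
  "star_X X Y v v' w = (if v \<in> X \<and> v' \<in> X then insert w X else X)"

definition star_Y :: "'a set \<Rightarrow> 'a set \<Rightarrow> 'a \<Rightarrow> 'a \<Rightarrow> 'a \<Rightarrow> 'a set" where
  "star_Y X Y v v' w = (if v \<in> Y \<and> v' \<in> Y then insert w Y else Y)"

end

theory Submission imports Defs begin

lemma walk_in_iff:
  "walk_in E S p \<longleftrightarrow> p \<noteq> [] \<and> set p \<subseteq> S \<and> (\<forall>j. Suc j < length p \<longrightarrow> E (p!j) (p!Suc j))"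
proof (induction E S p rule: walk_in.induct)
  case (3 E S x y xs)
  have "(\<forall>j. Suc j < length (x#y#xs) \<longrightarrow> E ((x#y#xs)!j) ((x#y#xs)!Suc j)) \<longleftrightarrow>
        E x y \<and> (\<forall>j. Suc j < length (y#xs) \<longrightarrow> E ((y#xs)!j) ((y#xs)!Suc j))"
    (is "?L \<longleftrightarrow> ?R")
  proof
    assume ?L
    then show ?R by (metis Suc_less_eq length_Cons nth_Cons_0 nth_Cons_Suc zero_less_Suc)
  next
    assume ?R
    then show ?L by (metis One_nat_def Suc_less_eq length_Cons nth_Cons_0 nth_Cons_Suc nth_Cons' not0_implies_Suc)
  qed
  then show ?case using 3 by auto
qed auto

definition ipath :: "('a \<Rightarrow> 'a \<Rightarrow> bool) \<Rightarrow> 'a set \<Rightarrow> 'a list \<Rightarrow> bool" where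
  "ipath E S p \<longleftrightarrow> walk_in E S p \<and> distinct p \<and>
     (\<forall>x<length p. \<forall>y<length p. E (p!x) (p!y) \<longrightarrow> x = Suc y \<or> y = Suc x)"

lemma walk_mono: "walk_in E S p \<Longrightarrow> S \<subseteq> T \<Longrightarrow> walk_in E T p"
  by (auto simp: walk_in_iff)

lemma ipath_mono: "ipath E S p \<Longrightarrow> S \<subseteq> T \<Longrightarrow> ipath E T p"
  by (auto simp: ipath_def walk_in_iff)

lemma walk_map: "(\<And>x y. x\<in>S \<Longrightarrow> y\<in>S \<Longrightarrow> E x y \<Longrightarrow> E2 (f x) (f y)) \<Longrightarrow> f`S \<subseteq> T
  \<Longrightarrow> walk_in E S p \<Longrightarrow> walk_in E2 T (map f p)"
  unfolding walk_in_iff by (auto simp: image_subset_iff subset_iff)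

lemma walk_rev: "(\<And>x y. E x y \<Longrightarrow> E y x) \<Longrightarrow> walk_in E S p \<Longrightarrow> walk_in E S (rev p)"
  unfolding walk_in_iff
proof (intro conjI allI impI)
  fix j assume s: "\<And>x y. E x y \<Longrightarrow> E y x"
    and h: "p \<noteq> [] \<and> set p \<subseteq> S \<and> (\<forall>j. Suc j < length p \<longrightarrow> E (p ! j) (p ! Suc j))"
    and j: "Suc j < length (rev p)"
  have "E (p ! (length p - Suc (Suc j))) (p ! Suc (length p - Suc (Suc j)))"
    using h j by auto
  moreover have "Suc (length p - Suc (Suc j)) = length p - Suc j" using j by auto
  ultimately show "E (rev p ! j) (rev p ! Suc j)" using j s by (auto simp: rev_nth)
qed auto

lemma ipath_rev: "(\<And>x y. E x y \<Longrightarrow> E y x) \<Longrightarrow> ipath E S p \<Longrightarrow> ipath E S (rev p)"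
  unfolding ipath_def
proof (intro conjI allI impI)
  assume s: "\<And>x y. E x y \<Longrightarrow> E y x" and h: "walk_in E S p \<and> distinct p \<and>
     (\<forall>x<length p. \<forall>y<length p. E (p!x) (p!y) \<longrightarrow> x = Suc y \<or> y = Suc x)"
  show "walk_in E S (rev p)" using walk_rev s h by blast
  show "distinct (rev p)" using h by simp
  fix x y assume x: "x < length (rev p)" and y: "y < length (rev p)" and e: "E (rev p ! x) (rev p ! y)"
  then have "E (p ! (length p - Suc x)) (p ! (length p - Suc y))" by (simp add: rev_nth)
  then have "length p - Suc x = Suc (length p - Suc y) \<or> length p - Suc y = Suc (length p - Suc x)"
    using h x y by auto
  then show "x = Suc y \<or> y = Suc x" using x y by auto
qed

lemma walk_sub: "walk_in E S p \<Longrightarrow> l \<le> h \<Longrightarrow> h < length p \<Longrightarrow> walk_in E S (map (nth p) [l..<Suc h])"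
  unfolding walk_in_iff
proof (intro conjI allI impI)
  fix j assume a: "p \<noteq> [] \<and> set p \<subseteq> S \<and> (\<forall>j. Suc j < length p \<longrightarrow> E (p ! j) (p ! Suc j))"
    "l \<le> h" "h < length p" and j: "Suc j < length (map ((!) p) [l..<Suc h])"
  then show "E (map ((!) p) [l..<Suc h] ! j) (map ((!) p) [l..<Suc h] ! Suc j)"
    by (auto simp del: upt_Suc simp: nth_map_upt)
qed (auto simp del: upt_Suc)

lemma ipath_sub: "ipath E S p \<Longrightarrow> l \<le> h \<Longrightarrow> h < length p \<Longrightarrow> ipath E S (map (nth p) [l..<Suc h])"
  unfolding ipath_def
proof (intro conjI allI impI)
  assume h: "walk_in E S p \<and> distinct p \<and>
     (\<forall>x<length p. \<forall>y<length p. E (p!x) (p!y) \<longrightarrow> x = Suc y \<or> y = Suc x)" and lh: "l \<le> h" "h < length p"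
  show "walk_in E S (map ((!) p) [l..<Suc h])" using walk_sub h lh by blast
  show "distinct (map ((!) p) [l..<Suc h])" using h lh
    by (auto simp: distinct_map inj_on_def nth_eq_iff_index_eq)
  fix x y assume "x < length (map ((!) p) [l..<Suc h])" "y < length (map ((!) p) [l..<Suc h])"
    "E (map ((!) p) [l..<Suc h] ! x) (map ((!) p) [l..<Suc h] ! y)"
  then have "E (p ! (l + x)) (p ! (l + y))" "l + x < length p" "l+y < length p"
    using h lh by (auto simp del: upt_Suc simp: nth_map_upt)
  then have "l + x = Suc (l + y) \<or> l + y = Suc (l + x)" using h by blast
  then show "x = Suc y \<or> y = Suc x" by auto
qed

lemma walk_short: "walk_in E S r \<Longrightarrow> length r \<le> 2 \<Longrightarrow> hd r = last r \<or> E (hd r) (last r)"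
  by (cases "(E,S,r)" rule: walk_in.cases) auto

lemma walk_append: "walk_in E S xs \<Longrightarrow> walk_in E S ys \<Longrightarrow> E (last xs) (hd ys) \<Longrightarrow> walk_in E S (xs @ ys)"
proof (induction xs)
  case (Cons x xs)
  show ?case
  proof (cases xs)
    case Nil then show ?thesis using Cons by (cases ys) auto
  next
    case (Cons y zs) then show ?thesis using Cons.prems Cons.IH by auto
  qed
qed simp

lemma walk_take: "walk_in E S p \<Longrightarrow> 0 < n \<Longrightarrow> walk_in E S (take n p)"
  by (auto simp: walk_in_iff dest: in_set_takeD)

lemma walk_drop: "walk_in E S p \<Longrightarrow> n < length p \<Longrightarrow> walk_in E S (drop n p)"
  by (auto simp: walk_in_iff dest: in_set_dropD)


lemma last_take_Suc: "x < length p \<Longrightarrow> last (take (Suc x) p) = p!x"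
  by (simp add: take_Suc_conv_app_nth)

lemma hd_last_sub: "i \<le> j \<Longrightarrow> hd (map f [i..<Suc j]) = f i \<and> last (map f [i..<Suc j]) = f j"
  by (simp del: upt_Suc add: hd_map last_map)

lemma walk_nonempty: "walk_in E S p \<Longrightarrow> p \<noteq> []"
  by (simp add: walk_in_iff)

lemma shortest_ipath:
  assumes w: "walk_in E S p" and sym: "\<And>x y. E x y \<Longrightarrow> E y x" and irr: "\<And>x. \<not> E x x"
    and sh: "\<And>q. walk_in E S q \<Longrightarrow> hd q = hd p \<Longrightarrow> last q = last p \<Longrightarrow> length p \<le> length q"
  shows "ipath E S p"
proof -
  have ne: "p \<noteq> []" using w by (simp add: walk_in_iff)
  have cut: "\<not> (E (p!x) (p!y))" if xy: "Suc x < y" "y < length p" for x y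
  proof
    assume e: "E (p!x) (p!y)"
    let ?q = "take (Suc x) p @ drop y p"
    have "walk_in E S ?q"
      apply (rule walk_append)
      using w xy e by (auto intro: walk_take walk_drop simp: hd_drop_conv_nth last_take_Suc)
    moreover have "hd ?q = hd p" using ne by simp
    moreover have "last ?q = last p" using xy by simp
    ultimately have "length p \<le> length ?q" by (rule sh)
    then show False using xy by simp
  qed
  have dist: "p!x \<noteq> p!y" if xy: "x < y" "y < length p" for x y
  proof
    assume e: "p!x = p!y"
    show False
    proof (cases "Suc y < length p")
      case True
      let ?q = "take (Suc x) p @ drop (Suc y) p"
      have "E (p!y) (p!Suc y)" using w True by (simp add: walk_in_iff)
      then have "walk_in E S ?q"
        apply (intro walk_append)
        using w xy e True by (auto intro: walk_take walk_drop simp: hd_drop_conv_nth last_take_Suc)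
      moreover have "hd ?q = hd p" using ne by simp
      moreover have "last ?q = last p" using True by simp
      ultimately have "length p \<le> length ?q" by (rule sh)
      then show False using xy True by simp
    next
      case False
      let ?q = "take (Suc x) p"
      have "walk_in E S ?q" using w by (auto intro: walk_take)
      moreover have "hd ?q = hd p" using ne by simp
      moreover have "y = length p - 1" using False xy by simp
      then have "last ?q = last p" using xy e
        by (simp add: last_take_Suc last_conv_nth ne)
      ultimately have "length p \<le> length ?q" by (rule sh)
      then show False using xy by simp
    qed
  qed
  show ?thesis unfolding ipath_def
  proof (intro conjI allI impI)
    show "walk_in E S p" by (rule w)
    show "distinct p" unfolding distinct_conv_nth
      by (metis dist linorder_neqE_nat)
    fix x y assume xy: "x < length p" "y < length p" "E (p!x) (p!y)"
    show "x = Suc y \<or> y = Suc x"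
    proof (rule ccontr)
      assume n: "\<not> (x = Suc y \<or> y = Suc x)"
      have "x \<noteq> y" using xy irr by auto
      then have "Suc x < y \<or> Suc y < x" using n by auto
      then show False using cut xy sym by blast
    qed
  qed
qed

lemma ipath_dist:
  assumes d: "distinct q" and c: "\<forall>x<length q. \<forall>y<length q. E (q!x) (q!y) \<longrightarrow> x = Suc y \<or> y = Suc x"
  shows "walk_in E (set q) r \<Longrightarrow> hd r = q!i \<Longrightarrow> last r = q!j \<Longrightarrow> i < length q \<Longrightarrow> j < length q
     \<Longrightarrow> j < i + length r \<and> i < j + length r"
proof (induction r arbitrary: i)
  case Nil then show ?case by simp
next
  case (Cons z rs)
  show ?case
  proof (cases rs)
    case Nil
    then have "q!i = q!j" using Cons.prems by simp
    then have "i = j" using d Cons.prems nth_eq_iff_index_eq by blast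
    then show ?thesis by simp
  next
    case (Cons z' rs')
    have "z' \<in> set q" using Cons.prems Cons by (simp add: walk_in_iff)
    then obtain i' where i': "i' < length q" "z' = q!i'" by (auto simp: in_set_conv_nth)
    have "E (q!i) (q!i')" using Cons.prems Cons i' by simp
    then have "i = Suc i' \<or> i' = Suc i" using c i' Cons.prems by blast
    moreover have "j < i' + length rs \<and> i' < j + length rs"
      using Cons.IH[of i'] Cons.prems Cons i' by simp
    ultimately show ?thesis by auto
  qed
qed

lemma lemmaA:
  assumes dh: "distance_hereditary V E" and sym: "\<And>x y. E x y \<Longrightarrow> E y x"
    and q: "ipath E V q" and r: "walk_in E V r" and hd: "hd r = hd q" and la: "last r = last q"
  shows "length q \<le> length r"
proof -
  have qw: "walk_in E V q" and qd: "distinct q"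
    and qc: "\<forall>x<length q. \<forall>y<length q. E (q!x) (q!y) \<longrightarrow> x = Suc y \<or> y = Suc x"
    using q by (auto simp: ipath_def)
  have qne: "q \<noteq> []" using qw by (simp add: walk_in_iff)
  have qS: "walk_in E (set q) q" using qw by (auto simp: walk_in_iff)
  have sub: "set q \<subseteq> V" using qw by (simp add: walk_in_iff)
  have con: "connected_in E (set q)" unfolding connected_in_def
  proof (intro conjI ballI)
    show "set q \<noteq> {}" using qne by simp
    fix u x assume "u \<in> set q" "x \<in> set q"
    then obtain i j where ij: "i < length q" "j < length q" "u = q!i" "x = q!j"
      by (auto simp: in_set_conv_nth)
    show "\<exists>p. walk_in E (set q) p \<and> hd p = u \<and> last p = x"
    proof (cases "i \<le> j")
      case True
      then show ?thesis using walk_sub[OF qS True ij(2)] ij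
        by (intro exI[of _ "map (nth q) [i..<Suc j]"]) (simp del: upt_Suc add: hd_last_sub)
    next
      case False
      then have "j \<le> i" by simp
      then show ?thesis using walk_rev[OF _ walk_sub[OF qS _ ij(1)]] sym ij
        by (intro exI[of _ "rev (map (nth q) [j..<Suc i])"]) (auto simp del: upt_Suc simp: hd_rev last_rev hd_last_sub)
    qed
  qed
  have eq: "dist_in E (set q) (hd q) (last q) = dist_in E V (hd q) (last q)"
    using dh sub con qne unfolding distance_hereditary_def by simp
  have "dist_in E V (hd q) (last q) \<le> length r - 1"
    unfolding dist_in_def
    apply (rule Least_le)
    using r hd la walk_nonempty[OF r] by (intro exI[of _ r]) auto
  moreover obtain p where p: "walk_in E (set q) p" "hd p = hd q" "last p = last q"
    "length p = Suc (dist_in E (set q) (hd q) (last q))"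
  proof -
    have "\<exists>n p. walk_in E (set q) p \<and> hd p = hd q \<and> last p = last q \<and> length p = Suc n"
      using qS qne by (intro exI[of _ "length q - 1"] exI[of _ q]) auto
    from LeastI_ex[OF this] show ?thesis using that unfolding dist_in_def by blast
  qed
  moreover have "length q - 1 < 0 + length p"
    using ipath_dist[OF qd qc p(1), of 0 "length q - 1"] p qne
    by (simp add: hd_conv_nth last_conv_nth)
  ultimately show ?thesis using eq walk_nonempty[OF r] by (cases r) auto
qed

lemma DH_from_ipaths:
  assumes sym: "\<And>x y. E x y \<Longrightarrow> E y x" and irr: "\<And>x. \<not> E x x"
    and H: "\<And>p r. ipath E V p \<Longrightarrow> walk_in E V r \<Longrightarrow> hd r = hd p \<Longrightarrow> last r = last p \<Longrightarrow> length p \<le> length r"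
  shows "distance_hereditary V E"
  unfolding distance_hereditary_def
proof (intro allI impI ballI)
  fix S u x assume S: "S \<subseteq> V" and c: "connected_in E S" and u: "u \<in> S" and x: "x \<in> S"
  obtain p0 where p0: "walk_in E S p0" "hd p0 = u" "last p0 = x"
    using c u x unfolding connected_in_def by blast
  obtain p where p: "walk_in E S p" "hd p = u" "last p = x" "length p = Suc (dist_in E S u x)"
  proof -
    have "\<exists>n p. walk_in E S p \<and> hd p = u \<and> last p = x \<and> length p = Suc n"
      using p0 walk_nonempty[OF p0(1)] by (intro exI[of _ "length p0 - 1"] exI[of _ p0]) auto
    from LeastI_ex[OF this] show ?thesis using that unfolding dist_in_def by blast
  qed
  have sh: "length p \<le> length q" if "walk_in E S q" "hd q = hd p" "last q = last p" for q
  proof -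
    have "dist_in E S u x \<le> length q - 1" unfolding dist_in_def
      apply (rule Least_le)
      using that p walk_nonempty[OF that(1)] by (intro exI[of _ q]) auto
    then show ?thesis using p(4) walk_nonempty[OF that(1)] by (cases q) auto
  qed
  have ip: "ipath E V p" using shortest_ipath[OF p(1) sym irr sh] ipath_mono S by blast
  have pV: "walk_in E V p" using p(1) S walk_mono by blast
  have le1: "dist_in E V u x \<le> length p - 1" unfolding dist_in_def
    apply (rule Least_le)
    using pV p by (intro exI[of _ p]) auto
  obtain r where r: "walk_in E V r" "hd r = u" "last r = x" "length r = Suc (dist_in E V u x)"
  proof -
    have "\<exists>n p. walk_in E V p \<and> hd p = u \<and> last p = x \<and> length p = Suc n"
      using pV p by (intro exI[of _ "length p - 1"] exI[of _ p]) auto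
    from LeastI_ex[OF this] show ?thesis using that unfolding dist_in_def by blast
  qed
  have "length p \<le> length r" using H[OF ip r(1)] r p by simp
  then show "dist_in E S u x = dist_in E V u x" using le1 p(4) r(4) by simp
qed


locale ctx =
  fixes V X Y :: "'a set" and E :: "'a \<Rightarrow> 'a \<Rightarrow> bool" and a b w :: 'a
  assumes bdh: "BDH V E X Y" and aX: "a \<in> X" and bX: "b \<in> X" and wV: "w \<notin> V"
begin

definition C :: "'a set" where "C = nbhd E a \<inter> nbhd E b"
definition E' :: "'a \<Rightarrow> 'a \<Rightarrow> bool" where
  "E' = (\<lambda>x y. E x y \<or> (x = w \<and> y \<in> C) \<or> (y = w \<and> x \<in> C))"

lemma sym: "E x y \<Longrightarrow> E y x" using bdh by (auto simp: BDH_def simple_graph_def)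
lemma irr: "\<not> E x x" using bdh by (auto simp: BDH_def simple_graph_def)
lemma edgeV: "E x y \<Longrightarrow> x \<in> V \<and> y \<in> V" using bdh by (auto simp: BDH_def simple_graph_def)
lemma dh: "distance_hereditary V E" using bdh by (auto simp: BDH_def)
lemma bip: "X \<inter> Y = {}" "X \<union> Y = V" "\<And>x x'. x\<in>X \<Longrightarrow> x'\<in>X \<Longrightarrow> \<not> E x x'"
  "\<And>y y'. y\<in>Y \<Longrightarrow> y'\<in>Y \<Longrightarrow> \<not> E y y'"
  using bdh by (auto simp: BDH_def bipartition_def)

lemma tri: "E x y \<Longrightarrow> E y z \<Longrightarrow> \<not> E x z"
proof
  assume e: "E x y" "E y z" "E x z"
  then have v: "x \<in> V" "y \<in> V" "z \<in> V" using edgeV by auto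
  show False
  proof (cases "x \<in> X")
    case True
    then have "y \<notin> X" using e bip(3) by blast
    then have "y \<in> Y" using v bip(2) by blast
    then have "z \<notin> Y" using e bip(4) by blast
    then have "z \<in> X" using v bip(2) by blast
    then show False using True e bip(3) by blast
  next
    case False
    then have "x \<in> Y" using v bip(2) by blast
    then have "y \<notin> Y" using e bip(4) by blast
    then have "y \<in> X" using v bip(2) by blast
    then have "z \<notin> X" using e bip(3) by blast
    then have "z \<in> Y" using v bip(2) by blast
    then show False using \<open>x \<in> Y\<close> e bip(4) by blast
  qed
qed

lemma aV: "a \<in> V" and bV: "b \<in> V" using aX bX bip(2) by auto
lemma CV: "C \<subseteq> V" using edgeV by (auto simp: C_def nbhd_def)
lemma wC: "w \<notin> C" using CV wV by auto
lemma Ca: "C \<subseteq> nbhd E a" and Cb: "C \<subseteq> nbhd E b" by (auto simp: C_def)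
lemma Ew: "\<not> E w y" "\<not> E y w" using edgeV wV by auto

lemma E'w: "E' w y \<longleftrightarrow> y \<in> C" "E' y w \<longleftrightarrow> y \<in> C"
  using Ew wC by (auto simp: E'_def)
lemma E'nw: "x \<noteq> w \<Longrightarrow> y \<noteq> w \<Longrightarrow> E' x y \<longleftrightarrow> E x y"
  by (auto simp: E'_def)
lemma E'sym: "E' x y \<Longrightarrow> E' y x" using sym by (auto simp: E'_def)
lemma E'irr: "\<not> E' x x" using irr wC by (auto simp: E'_def)
lemma EE': "E x y \<Longrightarrow> E' x y" by (auto simp: E'_def)

abbreviation V' where "V' \<equiv> insert w V"

lemma walk_f:
  assumes c: "c \<in> V" "C \<subseteq> nbhd E c" and r: "walk_in E' V' r"
  shows "walk_in E V (map (\<lambda>u. if u = w then c else u) r)"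
proof (rule walk_map[OF _ _ r])
  fix x y assume "x \<in> V'" "y \<in> V'" "E' x y"
  then show "E (if x = w then c else x) (if y = w then c else y)"
    using c E'w E'nw irr wC by (cases "x = w"; cases "y = w") (auto simp: nbhd_def sym)
qed (use c in auto)

lemma ipath_noW: "ipath E' V' p \<Longrightarrow> w \<notin> set p \<Longrightarrow> ipath E V p"
  unfolding ipath_def walk_in_iff
  by (auto simp: E'nw EE') (metis E'nw nth_mem Suc_lessD)+

lemma Good:
  assumes p: "ipath E' V' p" and c: "c \<in> V" "C \<subseteq> nbhd E c" and cp: "c \<notin> set p"
    and cn: "\<forall>u\<in>set p. E c u \<longrightarrow> u \<in> C"
    and r: "walk_in E' V' r" and hd: "hd r = hd p" and la: "last r = last p"
  shows "length p \<le> length r"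
proof -
  define f where "f = (\<lambda>u. if u = w then c else u)"
  have pw: "walk_in E' V' p" and pd: "distinct p"
    and pc: "\<forall>x<length p. \<forall>y<length p. E' (p!x) (p!y) \<longrightarrow> x = Suc y \<or> y = Suc x"
    using p by (auto simp: ipath_def)
  have inj: "inj_on f (set p)" using cp unfolding inj_on_def f_def by auto
  have q: "ipath E V (map f p)" unfolding ipath_def
  proof (intro conjI allI impI)
    show "walk_in E V (map f p)" unfolding f_def by (rule walk_f[OF c pw])
    show "distinct (map f p)" using inj pd by (simp add: distinct_map)
    fix x y assume xy: "x < length (map f p)" "y < length (map f p)" "E (map f p ! x) (map f p ! y)"
    have "E' (p!x) (p!y)"
    proof (cases "p!x = w")
      case True
      then have "p!y \<noteq> w" using xy irr by (auto simp: f_def)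
      then have "E c (p!y)" using xy True by (auto simp: f_def)
      then have "p!y \<in> C" using cn xy by auto
      then show ?thesis using True E'w by simp
    next
      case False
      show ?thesis
      proof (cases "p!y = w")
        case True
        then have "E (p!x) c" using xy False by (auto simp: f_def)
        then have "p!x \<in> C" using cn xy sym by auto
        then show ?thesis using True E'w by simp
      next
        case False2: False
        then show ?thesis using False xy by (auto simp: f_def E'nw)
      qed
    qed
    then show "x = Suc y \<or> y = Suc x" using pc xy by auto
  qed
  have r': "walk_in E V (map f r)" unfolding f_def by (rule walk_f[OF c r])
  have rne: "r \<noteq> []" using r by (simp add: walk_in_iff)
  have pne: "p \<noteq> []" using pw by (simp add: walk_in_iff)
  have "length (map f p) \<le> length (map f r)"
    using lemmaA[OF dh _ q r'] sym hd la rne pne by (simp add: hd_map last_map)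
  then show ?thesis by simp
qed

end

context ctx begin

lemma ip_facts:
  assumes "ipath E' V' p"
  shows "walk_in E' V' p" "distinct p"
    "\<And>x y. x < length p \<Longrightarrow> y < length p \<Longrightarrow> E' (p!x) (p!y) \<Longrightarrow> x = Suc y \<or> y = Suc x"
    "\<And>j. Suc j < length p \<Longrightarrow> E' (p!j) (p!Suc j)"
    "\<And>j. j < length p \<Longrightarrow> p!j \<in> V'"
  using assms by (auto simp: ipath_def walk_in_iff) (metis insertE nth_mem subsetD)

lemma ip_nw:
  assumes "ipath E' V' p" "p!i = w" "i < length p" "j < length p" "j \<noteq> i"
  shows "p!j \<noteq> w" "p!j \<in> V"
proof -
  show "p!j \<noteq> w" using assms ip_facts(2)[OF assms(1)] nth_eq_iff_index_eq by metis
  then show "p!j \<in> V" using ip_facts(5)[OF assms(1) assms(4)] by auto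
qed

lemma ip_nbr:
  assumes p: "ipath E' V' p" and i: "p!i = w" "i < length p"
  shows "Suc i < length p \<Longrightarrow> p!(Suc i) \<in> C" "0 < i \<Longrightarrow> p!(i - 1) \<in> C"
proof -
  assume "Suc i < length p"
  then have "E' (p!i) (p!Suc i)" using ip_facts(4)[OF p] by simp
  then have "E' w (p!Suc i)" using i by simp
  then show "p!(Suc i) \<in> C" by (simp add: E'w)
next
  assume "0 < i"
  then have "E' (p!(i-1)) (p!(Suc (i-1)))" using ip_facts(4)[OF p, of "i-1"] i by simp
  then show "p!(i - 1) \<in> C" using \<open>0 < i\<close> i by (simp add: E'w)
qed

lemma RS:
  assumes p: "ipath E' V' p" and i: "p!i = w" and c: "c \<in> V" "C \<subseteq> nbhd E c"
    and j: "i+2 \<le> j" "j < length p" and e: "E c (p!j)"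
  shows "j = i+3"
proof -
  have n1: "p!(Suc i) \<in> C" using ip_nbr(1)[OF p i] j by simp
  then have ec1: "E c (p!Suc i)" using c by (auto simp: nbhd_def)
  have w1: "p!(Suc i) \<noteq> w" "p!(Suc (Suc i)) \<noteq> w" using ip_nw[OF p i] j by auto
  have "E (p!Suc i) (p!(Suc (Suc i)))" using ip_facts(4)[OF p, of "Suc i"] j w1 E'nw by simp
  then have ne2: "j \<noteq> i+2" using tri[OF ec1] e by auto
  have "\<not> i + 4 \<le> j"
  proof
    assume j4: "i + 4 \<le> j"
    define q where "q = map (nth p) [Suc i..<Suc j]"
    have q1: "ipath E' V' q" unfolding q_def using ipath_sub[OF p _ j(2)] j by simp
    have "\<forall>t. Suc i \<le> t \<longrightarrow> t \<le> j \<longrightarrow> p!t \<noteq> w" using ip_nw(1)[OF p i] j by auto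
    then have "w \<notin> set q" unfolding q_def by (auto simp del: upt_Suc)
    then have q2: "ipath E V q" using ipath_noW q1 by blast
    have pjV: "p!j \<in> V" "p!Suc i \<in> V" using ip_nw(2)[OF p i] j by auto
    have r: "walk_in E V [p!Suc i, c, p!j]" using pjV c ec1 e sym by auto
    have "length q \<le> length [p!Suc i, c, p!j]"
      apply (rule lemmaA[OF dh _ q2 r]) using sym j unfolding q_def
      by (auto simp del: upt_Suc simp: hd_last_sub)
    then show False using j4 unfolding q_def by simp
  qed
  then show ?thesis using j ne2 by simp
qed

lemma Dom:
  assumes p: "ipath E' V' p" and i: "p!i = w" "0 < i" "i+3 < length p" and e: "E a (p!(i+3))"
  shows False
proof -
  define P0 where "P0 = p!(i-1)"
  define P1 where "P1 = p!(Suc i)"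
  define P2 where "P2 = p!(i+2)"
  define P3 where "P3 = p!(i+3)"
  have il: "i < length p" using i by simp
  have C01: "P0 \<in> C" "P1 \<in> C" unfolding P0_def P1_def using ip_nbr[OF p i(1) il] i by auto
  have nw: "P0 \<noteq> w" "P1 \<noteq> w" "P2 \<noteq> w" "P3 \<noteq> w" "P0 \<in> V" "P1 \<in> V" "P2 \<in> V" "P3 \<in> V"
    unfolding P0_def P1_def P2_def P3_def using ip_nw[OF p i(1) il] i by auto
  have ch: "\<And>x y. x < length p \<Longrightarrow> y < length p \<Longrightarrow> E (p!x) (p!y) \<Longrightarrow> x = Suc y \<or> y = Suc x"
    using ip_facts(3)[OF p] EE' by blast
  have nb3: "\<not> E b P3"
  proof
    assume "E b P3"
    then have "P3 \<in> C" using e unfolding C_def P3_def by (auto simp: nbhd_def)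
    then have "E' (p!i) (p!(i+3))" using i E'w unfolding P3_def by simp
    then show False using ip_facts(3)[OF p, of i "i+3"] i by simp
  qed
  have e12: "E P1 P2" unfolding P1_def P2_def
    using ip_facts(4)[OF p, of "Suc i"] i nw E'nw unfolding P1_def P2_def by simp
  have e23: "E P2 P3"
    using ip_facts(4)[OF p, of "i+2"] i nw E'nw unfolding P3_def P2_def by (simp add: eval_nat_numeral)
  have n03: "\<not> E P0 P3"
  proof
    assume "E P0 P3"
    then have "i-1 = Suc (i+3) \<or> i+3 = Suc (i-1)" using ch[of "i-1" "i+3"] i unfolding P0_def P3_def by linarith
    then show False using i by arith
  qed
  have n02: "\<not> E P0 P2"
  proof
    assume "E P0 P2"
    then have "i-1 = Suc (i+2) \<or> i+2 = Suc (i-1)" using ch[of "i-1" "i+2"] i unfolding P0_def P2_def by linarith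
    then show False using i by arith
  qed
  have nba: "\<not> E b a" using bip(3) aX bX by blast
  have eb0: "E b P0" "E b P1" "E a P0" "E a P1" using C01 Ca Cb by (auto simp: nbhd_def)
  have nb2: "\<not> E b P2" using tri[OF eb0(2) e12] .
  have na2: "\<not> E a P2" using tri[OF eb0(4) e12] .
  have ea3: "E a P3" using e unfolding P3_def .
  have d: "b \<noteq> P0" "b \<noteq> a" "b \<noteq> P3" "b \<noteq> P2" "P0 \<noteq> a" "P0 \<noteq> P3" "P0 \<noteq> P2" "a \<noteq> P3"
    "a \<noteq> P2" "P3 \<noteq> P2"
    using eb0 irr nb3 ea3 n03 n02 e23 by (metis sym)+
  define L where "L = [b, P0, a, P3, P2]"
  have L: "ipath E V L" unfolding ipath_def L_def
  proof (intro conjI allI impI)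
    show "walk_in E V [b, P0, a, P3, P2]" using eb0 ea3 e23 nw aV bV sym by auto
    show "distinct [b, P0, a, P3, P2]" using d by auto
    fix x y assume "x < length [b, P0, a, P3, P2]" "y < length [b, P0, a, P3, P2]"
      "E ([b, P0, a, P3, P2] ! x) ([b, P0, a, P3, P2] ! y)"
    then show "x = Suc y \<or> y = Suc x"
      using irr nba n03 n02 nb3 nb2 na2 sym
      by (auto simp: less_Suc_eq eval_nat_numeral)
  qed
  have r: "walk_in E V [b, P1, P2]" using eb0 e12 nw bV by auto
  have "length L \<le> length [b, P1, P2]"
    by (rule lemmaA[OF dh _ L r]) (auto simp: L_def sym)
  then show False unfolding L_def by simp
qed

lemma IntR:
  assumes p: "ipath E' V' p" and i: "p!i = w" "0 < i" and j: "i+2 \<le> j" "j < length p"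
  shows "\<not> E a (p!j)"
proof
  assume e: "E a (p!j)"
  then have "j = i+3" using RS[OF p i(1) aV Ca j] by simp
  then show False using Dom[OF p i] e j by simp
qed

lemma EP:
  assumes p: "ipath E' V' p" and i: "p!0 = w" and n: "4 \<le> length p"
    and r: "walk_in E' V' r" and hd: "hd r = hd p" and la: "last r = last p"
  shows "length p \<le> length r"
proof -
  have pne: "p \<noteq> []" "0 < length p" using n by auto
  have "Suc 0 < length p" "0 < length p" using n by auto
  from ip_nbr(1)[OF p i this(2) this(1)] have n1: "p!1 \<in> C" by simp
  obtain c where c: "c \<in> V" "C \<subseteq> nbhd E c" "\<not> E c (p!3)"
  proof (cases "E a (p!3)")
    case True
    have "\<not> E b (p!3)"
    proof
      assume "E b (p!3)"
      then have "p!3 \<in> C" using True unfolding C_def by (auto simp: nbhd_def)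
      then have "E' (p!0) (p!3)" using i by (simp add: E'w)
      then show False using ip_facts(3)[OF p, of 0 3] n by (cases p) auto
    qed
    then show ?thesis using that bV Cb by blast
  next
    case False
    then show ?thesis using that aV Ca by blast
  qed
  have nw: "\<And>j. j < length p \<Longrightarrow> j \<noteq> 0 \<Longrightarrow> p!j \<noteq> w \<and> p!j \<in> V"
    using ip_nw[OF p i pne(2)] by auto
  have ec1: "E c (p!1)" using n1 c by (auto simp: nbhd_def)
  have cp: "c \<notin> set p"
  proof
    assume "c \<in> set p"
    then obtain j where j: "j < length p" "c = p!j" by (auto simp: in_set_conv_nth)
    have "j \<noteq> 0" proof assume "j = 0" then show False using j i c(1) wV by simp qed
    then have "j = 2" using ip_facts(3)[OF p j(1), of 1] EE'[OF ec1] j n by auto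
    then have "E' (p!2) (p!3)" using ip_facts(4)[OF p, of 2] n by simp
    then have "E c (p!3)" using \<open>j = 2\<close> j nw[of 2] nw[of 3] n E'nw by simp
    then show False using c by simp
  qed
  have cn: "\<forall>u\<in>set p. E c u \<longrightarrow> u \<in> C"
  proof (intro ballI impI)
    fix u assume "u \<in> set p" "E c u"
    then obtain j where j: "j < length p" "u = p!j" by (auto simp: in_set_conv_nth)
    show "u \<in> C"
    proof -
      consider "j = 0" | "j = 1" | "2 \<le> j" by linarith
      then show ?thesis
      proof cases
        case 1 then show ?thesis using j i \<open>E c u\<close> Ew by simp
      next
        case 2 then show ?thesis using j n1 by simp
      next
        case 3 then have "j = 3" using RS[OF p i c(1,2), of j] j \<open>E c u\<close> by simp
        then show ?thesis using j c \<open>E c u\<close> by simp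
      qed
    qed
  qed
  show ?thesis by (rule Good[OF p c(1,2) cp cn r hd la])
qed

end

context ctx begin

lemma MainL:
  assumes p: "ipath E' V' p" and r: "walk_in E' V' r" and hd: "hd r = hd p" and la: "last r = last p"
  shows "length p \<le> length r"
proof (cases "w \<in> set p")
  case False
  have q: "ipath E V p" using ipath_noW[OF p False] .
  define f where "f = (\<lambda>u. if u = w then a else u)"
  have r': "walk_in E V (map f r)" unfolding f_def by (rule walk_f[OF aV Ca r])
  have rne: "r \<noteq> []" using r by (simp add: walk_in_iff)
  have pne: "p \<noteq> []" using p by (simp add: ipath_def walk_in_iff)
  have "hd p \<noteq> w" "last p \<noteq> w" using False pne by auto
  then have "hd (map f r) = hd p" "last (map f r) = last p"
    using hd la rne by (auto simp: hd_map last_map f_def)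
  then have "length p \<le> length (map f r)" using lemmaA[OF dh _ q r'] sym by blast
  then show ?thesis by simp
next
  case True
  then obtain i where i: "i < length p" "p!i = w" by (auto simp: in_set_conv_nth)
  have pne: "p \<noteq> []" "0 < length p" using i by auto
  have rne: "r \<noteq> []" using r by (simp add: walk_in_iff)
  show ?thesis
  proof (cases "length p \<le> 3")
    case small: True
    show ?thesis
    proof (rule ccontr)
      assume "\<not> length p \<le> length r"
      then have lr: "length r < length p" "length r \<le> 2" using small by auto
      have h0: "hd p = p!0" "last p = p!(length p - 1)" using pne by (auto simp: hd_conv_nth last_conv_nth)
      have ne: "p!0 \<noteq> p!(length p - 1)"
        using ip_facts(2)[OF p] lr rne nth_eq_iff_index_eq[of p 0 "length p - 1"] pne
        by (cases r) auto
      from walk_short[OF r lr(2)] show False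
      proof
        assume "hd r = last r" then show False using hd la h0 ne by simp
      next
        assume e: "E' (hd r) (last r)"
        then have "E' (p!0) (p!(length p - 1))" using hd la h0 by simp
        then have "length p - 1 = 1" using ip_facts(3)[OF p, of 0 "length p - 1"] pne by auto
        moreover have "length r \<noteq> 0" using rne by simp
        ultimately have "length r = 1" using lr by linarith
        then have "hd r = last r" by (cases r) auto
        then show False using e E'irr by simp
      qed
    qed
  next
    case big: False
    show ?thesis
    proof (cases "i = 0")
      case True
      then show ?thesis using EP[OF p _ _ r hd la] i big by simp
    next
      case i0: False
      show ?thesis
      proof (cases "i = length p - 1")
        case True
        have p': "ipath E' V' (rev p)" using ipath_rev[OF _ p] E'sym by blast
        have r': "walk_in E' V' (rev r)" using walk_rev[OF _ r] E'sym by blast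
        have "rev p ! 0 = w" using True i pne by (simp add: rev_nth)
        then have "length (rev p) \<le> length (rev r)"
          using EP[OF p' _ _ r'] big hd la rne pne by (simp add: hd_rev last_rev)
        then show ?thesis by simp
      next
        case False
        define n where "n = length p"
        have ii: "0 < i" "Suc i < n" using i0 False i unfolding n_def by auto
        have right: "\<And>j. i+2 \<le> j \<Longrightarrow> j < n \<Longrightarrow> \<not> E a (p!j)"
          using IntR[OF p i(2) ii(1)] unfolding n_def by blast
        have p': "ipath E' V' (rev p)" using ipath_rev[OF _ p] E'sym by blast
        have rw: "rev p ! (n - 1 - i) = w" using i ii unfolding n_def by (simp add: rev_nth)
        have left: "\<not> E a (p!j)" if "j + 2 \<le> i" for j
        proof -
          have "\<not> E a (rev p ! (n - 1 - j))"
            using IntR[OF p' rw _, of "n - 1 - j"] that ii unfolding n_def by simp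
          moreover have "rev p ! (n - 1 - j) = p ! j" using that ii unfolding n_def
            by (simp add: rev_nth)
          ultimately show ?thesis by simp
        qed
        have nC: "p!(Suc i) \<in> C" "p!(i - 1) \<in> C" using ip_nbr[OF p i(2) i(1)] ii unfolding n_def by auto
        have cp: "a \<notin> set p"
        proof
          assume "a \<in> set p"
          then obtain j where j: "j < n" "p!j = a" by (auto simp: in_set_conv_nth n_def)
          have "j \<noteq> i" using j i aV wV by auto
          have "E a (p!Suc i)" "E a (p!(i-1))" using nC Ca by (auto simp: nbhd_def)
          then have "E' (p!j) (p!Suc i)" "E' (p!j) (p!(i-1))" using j EE' by auto
          then have "j = Suc (Suc i) \<or> Suc i = Suc j" "j = Suc (i - 1) \<or> i - 1 = Suc j"
            using ip_facts(3)[OF p, of j "Suc i"] ip_facts(3)[OF p, of j "i - 1"] j ii unfolding n_def by auto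
          then show False using \<open>j \<noteq> i\<close> ii by auto
        qed
        have cn: "\<forall>u\<in>set p. E a u \<longrightarrow> u \<in> C"
        proof (intro ballI impI)
          fix u assume u: "u \<in> set p" "E a u"
          then obtain j where j: "j < n" "u = p!j" by (auto simp: in_set_conv_nth n_def)
          consider "j = i" | "j = Suc i" | "Suc j = i" | "i + 2 \<le> j" | "j + 2 \<le> i" by linarith
          then show "u \<in> C"
          proof cases
            case 1 then show ?thesis using u j i Ew by simp
          next
            case 2 then show ?thesis using j nC by simp
          next
            case 3 then have "j = i - 1" by simp
            then show ?thesis using j nC by simp
          next
            case 4 then show ?thesis using right j u by simp
          next
            case 5 then show ?thesis using left j u by simp
          qed
        qed
        show ?thesis by (rule Good[OF p aV Ca cp cn r hd la])
      qed
    qed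
  qed
qed

lemma result:
  "BDH (insert w V) (\<lambda>x y. E x y \<or> (x = w \<and> y \<in> nbhd E a \<inter> nbhd E b) \<or> (y = w \<and> x \<in> nbhd E a \<inter> nbhd E b))
     (insert w X) Y"
proof -
  have E'eq: "E' = (\<lambda>x y. E x y \<or> (x = w \<and> y \<in> nbhd E a \<inter> nbhd E b) \<or> (y = w \<and> x \<in> nbhd E a \<inter> nbhd E b))"
    by (simp add: E'_def C_def)
  have fin: "finite V" using bdh by (simp add: BDH_def simple_graph_def)
  have sg: "simple_graph V' E'" unfolding simple_graph_def
    using fin E'sym E'irr edgeV CV by (auto simp: E'_def)
  have bp: "bipartition V' E' (insert w X) Y" unfolding bipartition_def
  proof (intro conjI ballI)
    show "insert w X \<inter> Y = {}" using bip(1,2) wV by auto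
    show "insert w X \<union> Y = V'" using bip(2) by auto
    fix y y' assume "y \<in> Y" "y' \<in> Y"
    then show "\<not> E' y y'" using bip(2,4) wV by (auto simp: E'_def)
  next
    fix x x' assume x: "x \<in> insert w X" "x' \<in> insert w X"
    have cX: "c \<notin> X" if "c \<in> C" for c using that aX bip(3) by (auto simp: C_def nbhd_def)
    show "\<not> E' x x'"
    proof
      assume e: "E' x x'"
      show False
      proof (cases "x = w")
        case True
        then have "x' \<in> C" using e E'w by simp
        then show False using cX x wC by auto
      next
        case False
        show False
        proof (cases "x' = w")
          case True
          then have "x \<in> C" using e E'w by simp
          then show False using cX x wC by auto
        next
          case False2: False
          then have "E x x'" using e False E'nw by simp
          then show False using x False False2 bip(3) by auto
        qed
      qed
    qed
  qed
  have dh': "distance_hereditary V' E'"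
    by (rule DH_from_ipaths[OF E'sym E'irr MainL]) auto
  show ?thesis using sg bp dh' E'eq by (simp add: BDH_def)
qed

end

lemma BDH_swap: "BDH V E X Y \<Longrightarrow> BDH V E Y X"
  by (auto simp: BDH_def bipartition_def)

theorem theorem3:
  fixes V X Y :: "'a set" and E :: "'a \<Rightarrow> 'a \<Rightarrow> bool" and v v' w :: 'a
  assumes "BDH V E X Y" and "v \<in> V" and "v' \<in> V" and "w \<notin> V"
  shows "BDH (star_V V X Y v v' w) (star_E E X Y v v' w) (star_X X Y v v' w) (star_Y X Y v v' w)"
proof (cases "same_class X Y v v'")
  case False
  then have "\<not> (v \<in> X \<and> v' \<in> X)" "\<not> (v \<in> Y \<and> v' \<in> Y)" by (auto simp: same_class_def)
  then show ?thesis using False assms(1) by (auto simp: star_V_def star_E_def star_X_def star_Y_def)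
next
  case True
  have disj: "X \<inter> Y = {}" using assms(1) by (auto simp: BDH_def bipartition_def)
  show ?thesis
  proof (cases "v \<in> X \<and> v' \<in> X")
    case vX: True
    then have nY: "\<not> (v \<in> Y \<and> v' \<in> Y)" using disj by auto
    interpret ctx V X Y E v v' w using assms(1,4) vX by unfold_locales auto
    show ?thesis using result True vX nY by (auto simp: star_V_def star_E_def star_X_def star_Y_def)
  next
    case nX: False
    then have vY: "v \<in> Y \<and> v' \<in> Y" using True by (auto simp: same_class_def)
    interpret ctx V Y X E v v' w using BDH_swap[OF assms(1)] assms(4) vY by unfold_locales auto
    show ?thesis using BDH_swap[OF result] True nX vY by (auto simp: star_V_def star_E_def star_X_def star_Y_def)
  qed
qed

end
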